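(* In the relatively free algebra $R=\mathbb{K}\langle Y\cup Z\rangle/I$, the image of every polynomial $f(z_1,\dots,z_n)$ in the odd variables only is a linear combination of the images of the polynomials $(z_{i_1}\circ z_{i_2})\cdots(z_{i_{2k-1}}\circ z_{i_{2k}})\,z_{j_1}\cdots z_{j_l}$, with $k,l\ge0$, $i_1\le i_2\le\dots\le i_{2k}$ and $j_1\le j_2\le\dots\le j_l$.
   Context: $\mathbb{K}$ is an infinite field of characteristic different from $2$. $\mathbb{K}\langle Y\cup Z\rangle$ is the free associative algebra on disjoint countable sets $Y=\{y_1,y_2,\dots\}$ (degree $0$) and $Z=\{z_1,z_2,\dots\}$ (degree $1$). Notation: $[a,b]=ab-ba$, $[a_1,\dots,a_n]=[[a_1,\dots,a_{n-1}],a_n]$, $a\circ b=ab+ba$. A $T_2$-ideal is an ideal of $\mathbb{K}\langle Y\cup Z\rangle$ stable under all graded endomorphisms (those sending each $y_i$ to a polynomial of degree $0$ and each $z_i$ to one of degree $1$). $I$ is the $T_2$-ideal generated by: (1) $[y_1,y_2,y_3]$, $[y_1,y_2,z_3]$; (2) $[y_1,z_2,y_3]$; (3) $[y_1,z_2]\circ z_3$; (4) $[z_1\circ z_2,z_3]$; (5) $(z_1\circ z_2)(z_3\circ z_4)-(z_1\circ z_3)(z_2\circ z_4)$; (6) $[x_1,y_2][y_3,x_4]+[x_1,y_3][y_2,x_4]$ for all choices $x_1\in\{y_1,z_1\}$, $x_4\in\{y_4,z_4\}$; (7) $[y_1,z_2](z_3\circ z_4)-[y_1,z_3](z_2\circ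 z_4)$. *)

theory Defs
  imports Main
begin

text \<open>Variables: Y i are the even (degree 0) variables y_i, Z i the odd (degree 1) variables z_i.\<close>
datatype var = Y nat | Z nat

type_synonym 'k fpoly = "var list \<Rightarrow> 'k"

definition FA :: "('k::field) fpoly set" where
  "FA = {f. finite {w. f w \<noteq> 0}}"

definition pzero :: "('k::field) fpoly" where "pzero = (\<lambda>w. 0)"
definition pone :: "('k::field) fpoly" where "pone = (\<lambda>w. if w = [] then 1 else 0)"
definition pvar :: "var \<Rightarrow> ('k::field) fpoly" where "pvar x = (\<lambda>w. if w = [x] then 1 else 0)"
definition padd :: "('k::field) fpoly \<Rightarrow> 'k fpoly \<Rightarrow> 'k fpoly" where "padd f g = (\<lambda>w. f w + g w)"
definition psub :: "('k::field) fpoly \<Rightarrow> 'k fpoly \<Rightarrow> 'k fpoly" where "psub f g = (\<lambda>w. f w - g w)"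
definition smult :: "'k \<Rightarrow> ('k::field) fpoly \<Rightarrow> 'k fpoly" where "smult c f = (\<lambda>w. c * f w)"
definition pmult :: "('k::field) fpoly \<Rightarrow> 'k fpoly \<Rightarrow> 'k fpoly" where
  "pmult f g = (\<lambda>w. \<Sum>i\<le>length w. f (take i w) * g (drop i w))"

definition yv :: "nat \<Rightarrow> ('k::field) fpoly" where "yv i = pvar (Y i)"
definition zv :: "nat \<Rightarrow> ('k::field) fpoly" where "zv i = pvar (Z i)"

definition comm :: "('k::field) fpoly \<Rightarrow> 'k fpoly \<Rightarrow> 'k fpoly" where
  "comm a b = psub (pmult a b) (pmult b a)"
definition comm3 :: "('k::field) fpoly \<Rightarrow> 'k fpoly \<Rightarrow> 'k fpoly \<Rightarrow> 'k fpoly" where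
  "comm3 a b c = comm (comm a b) c"
definition jord :: "('k::field) fpoly \<Rightarrow> 'k fpoly \<Rightarrow> 'k fpoly" where
  "jord a b = padd (pmult a b) (pmult b a)"

definition prodl :: "('k::field) fpoly list \<Rightarrow> 'k fpoly" where
  "prodl ps = foldr pmult ps pone"

fun isZ :: "var \<Rightarrow> bool" where "isZ (Z _) = True" | "isZ (Y _) = False"

definition zdeg :: "var list \<Rightarrow> nat" where "zdeg w = length (filter isZ w)"

text \<open>Homogeneous of degree 0 / degree 1 (the zero polynomial is of both degrees).\<close>
definition hom0 :: "('k::field) fpoly \<Rightarrow> bool" where
  "hom0 f \<longleftrightarrow> f \<in> FA \<and> (\<forall>w. f w \<noteq> 0 \<longrightarrow> even (zdeg w))"
definition hom1 :: "('k::field) fpoly \<Rightarrow> bool" where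
  "hom1 f \<longleftrightarrow> f \<in> FA \<and> (\<forall>w. f w \<noteq> 0 \<longrightarrow> odd (zdeg w))"

definition graded_subst :: "(var \<Rightarrow> ('k::field) fpoly) \<Rightarrow> bool" where
  "graded_subst \<phi> \<longleftrightarrow> (\<forall>i. hom0 (\<phi> (Y i)) \<and> hom1 (\<phi> (Z i)))"

text \<open>The algebra endomorphism determined by the images of the variables.\<close>
definition wordprod :: "(var \<Rightarrow> ('k::field) fpoly) \<Rightarrow> var list \<Rightarrow> 'k fpoly" where
  "wordprod \<phi> w = prodl (map \<phi> w)"
definition psubst :: "(var \<Rightarrow> ('k::field) fpoly) \<Rightarrow> 'k fpoly \<Rightarrow> 'k fpoly" where
  "psubst \<phi> f = (\<lambda>u. \<Sum>w\<in>{w. f w \<noteq> 0}. f w * wordprod \<phi> w u)"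

definition is_ideal :: "('k::field) fpoly set \<Rightarrow> bool" where
  "is_ideal J \<longleftrightarrow> J \<subseteq> FA \<and> pzero \<in> J
     \<and> (\<forall>f\<in>J. \<forall>g\<in>J. padd f g \<in> J)
     \<and> (\<forall>c. \<forall>f\<in>J. smult c f \<in> J)
     \<and> (\<forall>f\<in>J. \<forall>h\<in>FA. pmult h f \<in> J \<and> pmult f h \<in> J)"

definition is_T2_ideal :: "('k::field) fpoly set \<Rightarrow> bool" where
  "is_T2_ideal J \<longleftrightarrow> is_ideal J \<and> (\<forall>\<phi>. graded_subst \<phi> \<longrightarrow> (\<forall>f\<in>J. psubst \<phi> f \<in> J))"

definition T2_gen :: "('k::field) fpoly set \<Rightarrow> 'k fpoly set" where
  "T2_gen S = \<Inter> {J. is_T2_ideal J \<and> S \<subseteq> J}"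

definition Igens :: "('k::field) fpoly set" where
  "Igens = {comm3 (yv 1) (yv 2) (yv 3), comm3 (yv 1) (yv 2) (zv 3),
            comm3 (yv 1) (zv 2) (yv 3),
            jord (comm (yv 1) (zv 2)) (zv 3),
            comm (jord (zv 1) (zv 2)) (zv 3),
            psub (pmult (jord (zv 1) (zv 2)) (jord (zv 3) (zv 4)))
                 (pmult (jord (zv 1) (zv 3)) (jord (zv 2) (zv 4))),
            psub (pmult (comm (yv 1) (zv 2)) (jord (zv 3) (zv 4)))
                 (pmult (comm (yv 1) (zv 3)) (jord (zv 2) (zv 4)))}
   \<union> {padd (pmult (comm x1 (yv 2)) (comm (yv 3) x4)) (pmult (comm x1 (yv 3)) (comm (yv 2) x4))
       | x1 x4. x1 \<in> {yv 1, zv 1} \<and> x4 \<in> {yv 4, zv 4}}"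

definition Iideal :: "('k::field) fpoly set" where
  "Iideal = T2_gen Igens"

text \<open>(z_{i1} o z_{i2}) ... (z_{i(2k-1)} o z_{i(2k)}) z_{j1} ... z_{jl}, with the pair list
  ps = [(i1,i2),...,(i(2k-1),i(2k))] and js = [j1,...,jl], indices in {1..n}, both sorted.\<close>
definition std_poly :: "(nat \<times> nat) list \<Rightarrow> nat list \<Rightarrow> ('k::field) fpoly" where
  "std_poly ps js = pmult (prodl (map (\<lambda>(a,b). jord (zv a) (zv b)) ps)) (prodl (map zv js))"

definition StdSet :: "nat \<Rightarrow> ('k::field) fpoly set" where
  "StdSet n = {std_poly ps js | ps js.
      sorted (concat (map (\<lambda>(a,b). [a,b]) ps)) \<and> sorted js
      \<and> set (concat (map (\<lambda>(a,b). [a,b]) ps)) \<subseteq> {1..n} \<and> set js \<subseteq> {1..n}}"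

inductive_set lin_span :: "('k::field) fpoly set \<Rightarrow> 'k fpoly set" for S where
  zero: "pzero \<in> lin_span S"
| step: "p \<in> S \<Longrightarrow> q \<in> lin_span S \<Longrightarrow> padd (smult c p) q \<in> lin_span S"

end

theory Submission
  imports Defs "HOL-Library.Function_Algebras"
begin

lemma sum_apply_fun: "(\<Sum>i\<in>A. F i) x = (\<Sum>i\<in>A. F i x)"
  by (induction A rule: infinite_finite_induct) auto

definition mon :: "var list \<Rightarrow> ('k::field) fpoly" where
  "mon w = (\<lambda>u. if u = w then 1 else 0)"

lemma padd_eq: "padd f g = f + g" by (simp add: padd_def fun_eq_iff)
lemma psub_eq: "psub f g = f - g" by (simp add: psub_def fun_eq_iff)
lemma pzero_eq: "pzero = 0" by (simp add: pzero_def fun_eq_iff)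
lemma pone_eq: "pone = mon []" by (simp add: pone_def mon_def)
lemma pvar_eq: "pvar x = mon [x]" by (simp add: pvar_def mon_def)

definition splits :: "var list \<Rightarrow> (var list \<times> var list) set" where
  "splits w = {(u,v). u @ v = w}"

lemma splits_image: "splits w = (\<lambda>i. (take i w, drop i w)) ` {..length w}"
proof -
  have "(u,v) \<in> (\<lambda>i. (take i w, drop i w)) ` {..length w}" if "u @ v = w" for u v
    using that by (intro image_eqI[of _ _ "length u"]) auto
  then show ?thesis by (auto simp: splits_def)
qed

lemma finite_splits[simp]: "finite (splits w)"
  by (simp add: splits_image)

lemma pmult_alt: "pmult f g w = (\<Sum>(u,v)\<in>splits w. f u * g v)"
proof -
  have inj: "inj_on (\<lambda>i. (take i w, drop i w)) {..length w}"
    by (rule inj_onI) (metis atMost_iff length_take min.absorb2 prod.inject)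
  show ?thesis
    unfolding pmult_def splits_image sum.reindex[OF inj] by (simp add: comp_def)
qed

lemma pmult_add_left: "pmult (f + g) h = pmult f h + pmult g h"
  by (simp add: pmult_def fun_eq_iff distrib_right sum.distrib)
lemma pmult_add_right: "pmult h (f + g) = pmult h f + pmult h g"
  by (simp add: pmult_def fun_eq_iff distrib_left sum.distrib)
lemma pmult_diff_left: "pmult (f - g) h = pmult f h - pmult g h"
  by (simp add: pmult_def fun_eq_iff left_diff_distrib sum_subtractf)
lemma pmult_diff_right: "pmult h (f - g) = pmult h f - pmult h g"
  by (simp add: pmult_def fun_eq_iff right_diff_distrib sum_subtractf)
lemma pmult_minus_left: "pmult (- f) h = - pmult f h"
  by (simp add: pmult_def fun_eq_iff sum_negf)
lemma pmult_minus_right: "pmult h (- f) = - pmult h f"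
  by (simp add: pmult_def fun_eq_iff sum_negf)
lemma pmult_zero_left[simp]: "pmult 0 h = 0"
  by (simp add: pmult_def fun_eq_iff)
lemma pmult_zero_right[simp]: "pmult h 0 = 0"
  by (simp add: pmult_def fun_eq_iff)
lemma pmult_smult_left: "pmult (smult c f) h = smult c (pmult f h)"
  by (simp add: pmult_def smult_def fun_eq_iff sum_distrib_left mult.assoc)
lemma pmult_smult_right: "pmult h (smult c f) = smult c (pmult h f)"
  by (simp add: pmult_def smult_def fun_eq_iff sum_distrib_left mult.assoc mult.left_commute)
lemma pmult_sum_left: "pmult (\<Sum>i\<in>I. F i) h = (\<Sum>i\<in>I. pmult (F i) h)"
  by (simp add: pmult_def fun_eq_iff sum_apply_fun sum_distrib_right sum.swap[where A=I])
lemma pmult_sum_right: "pmult h (\<Sum>i\<in>I. F i) = (\<Sum>i\<in>I. pmult h (F i))"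
  by (simp add: pmult_def fun_eq_iff sum_apply_fun sum_distrib_left sum.swap[where A=I])

lemma pmult_mon: "pmult (mon a) (mon b) = mon (a @ b)"
proof (rule ext)
  fix w
  have "pmult (mon a) (mon b) w = (\<Sum>x\<in>splits w. if x = (a,b) then 1 else 0)"
    unfolding pmult_alt by (rule sum.cong) (auto simp: mon_def split: if_splits)
  also have "\<dots> = mon (a@b) w" by (subst sum.delta[OF finite_splits]) (auto simp: splits_def mon_def)
  finally show "pmult (mon a) (mon b) w = mon (a @ b) w" .
qed

lemma pmult_one_left[simp]: "pmult pone f = f"
proof (rule ext)
  fix w
  have "pmult pone f w = (\<Sum>x\<in>splits w. if x = ([],w) then f w else 0)"
    unfolding pmult_alt by (rule sum.cong) (auto simp: pone_def splits_def split: if_splits)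
  also have "\<dots> = f w" by (subst sum.delta[OF finite_splits]) (auto simp: splits_def)
  finally show "pmult pone f w = f w" .
qed

lemma pmult_one_right[simp]: "pmult f pone = f"
proof (rule ext)
  fix w
  have "pmult f pone w = (\<Sum>x\<in>splits w. if x = (w,[]) then f w else 0)"
    unfolding pmult_alt by (rule sum.cong) (auto simp: pone_def splits_def split: if_splits)
  also have "\<dots> = f w" by (subst sum.delta[OF finite_splits]) (auto simp: splits_def)
  finally show "pmult f pone w = f w" .
qed

definition splits3 :: "var list \<Rightarrow> (var list \<times> var list \<times> var list) set" where
  "splits3 w = {(s,t,v). s @ t @ v = w}"

lemma pmult_assoc: "pmult (pmult f g) h = pmult f (pmult g h)"
proof (rule ext)
  fix w
  have L: "pmult (pmult f g) h w = (\<Sum>(s,t,v)\<in>splits3 w. f s * g t * h v)"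
  proof -
    have "pmult (pmult f g) h w = (\<Sum>(x,v)\<in>splits w. \<Sum>(s,t)\<in>splits x. f s * g t * h v)"
      unfolding pmult_alt by (simp add: case_prod_beta sum_distrib_right)
    also have "\<dots> = (\<Sum>x\<in>splits w. \<Sum>y\<in>splits (fst x). f (fst y) * g (snd y) * h (snd x))"
      by (simp add: split_def)
    also have "\<dots> = (\<Sum>(x,y)\<in>Sigma (splits w) (\<lambda>x. splits (fst x)). f (fst y) * g (snd y) * h (snd x))"
      by (rule sum.Sigma) auto
    also have "\<dots> = (\<Sum>(s,t,v)\<in>splits3 w. f s * g t * h v)"
      by (rule sum.reindex_bij_witness[where i="\<lambda>(s,t,v). ((s@t,v),(s,t))" and j="\<lambda>((x,v),(s,t)). (s,t,v)"])
         (auto simp: splits_def splits3_def)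
    finally show ?thesis .
  qed
  have R: "pmult f (pmult g h) w = (\<Sum>(s,t,v)\<in>splits3 w. f s * g t * h v)"
  proof -
    have "pmult f (pmult g h) w = (\<Sum>(s,y)\<in>splits w. \<Sum>(t,v)\<in>splits y. f s * g t * h v)"
      unfolding pmult_alt by (simp add: case_prod_beta sum_distrib_left mult.assoc)
    also have "\<dots> = (\<Sum>x\<in>splits w. \<Sum>y\<in>splits (snd x). f (fst x) * g (fst y) * h (snd y))"
      by (simp add: split_def)
    also have "\<dots> = (\<Sum>(x,y)\<in>Sigma (splits w) (\<lambda>x. splits (snd x)). f (fst x) * g (fst y) * h (snd y))"
      by (rule sum.Sigma) auto
    also have "\<dots> = (\<Sum>(s,t,v)\<in>splits3 w. f s * g t * h v)"
      by (rule sum.reindex_bij_witness[where i="\<lambda>(s,t,v). ((s,t@v),(t,v))" and j="\<lambda>((s,y),(t,v)). (s,t,v)"])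
         (auto simp: splits_def splits3_def)
    finally show ?thesis .
  qed
  show "pmult (pmult f g) h w = pmult f (pmult g h) w" using L R by simp
qed


section \<open>Finite support\<close>

lemma fa_zero[simp]: "0 \<in> FA" by (simp add: FA_def)
lemma fa_mon[simp]: "mon w \<in> FA"
proof -
  have "{u. mon w u \<noteq> (0::'a::field)} \<subseteq> {w}" by (auto simp: mon_def)
  then show ?thesis unfolding FA_def by (auto intro: finite_subset)
qed
lemma fa_add[simp]: "f \<in> FA \<Longrightarrow> g \<in> FA \<Longrightarrow> f + g \<in> FA"
  unfolding FA_def by (auto intro: finite_subset[of _ "{w. f w \<noteq> 0} \<union> {w. g w \<noteq> 0}"])
lemma fa_diff[simp]: "f \<in> FA \<Longrightarrow> g \<in> FA \<Longrightarrow> f - g \<in> FA"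
  unfolding FA_def by (auto intro: finite_subset[of _ "{w. f w \<noteq> 0} \<union> {w. g w \<noteq> 0}"])
lemma fa_smult[simp]: "f \<in> FA \<Longrightarrow> smult c f \<in> FA"
  unfolding FA_def smult_def by (auto intro: finite_subset[of _ "{w. f w \<noteq> 0}"])
lemma fa_sum[simp]: "(\<And>i. i \<in> I \<Longrightarrow> F i \<in> FA) \<Longrightarrow> (\<Sum>i\<in>I. F i) \<in> FA"
  by (induction I rule: infinite_finite_induct) auto
lemma fa_pmult[simp]: "f \<in> FA \<Longrightarrow> g \<in> FA \<Longrightarrow> pmult f g \<in> FA"
proof -
  assume f: "f \<in> FA" and g: "g \<in> FA"
  have "{w. pmult f g w \<noteq> 0} \<subseteq> (\<lambda>(u,v). u @ v) ` ({u. f u \<noteq> 0} \<times> {v. g v \<noteq> 0})"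
  proof
    fix w assume "w \<in> {w. pmult f g w \<noteq> 0}"
    then have "(\<Sum>(u,v)\<in>splits w. f u * g v) \<noteq> 0" by (simp add: pmult_alt)
    then obtain p where "p \<in> splits w" "(case p of (u,v) \<Rightarrow> f u * g v) \<noteq> 0"
      by (meson sum.not_neutral_contains_not_neutral)
    then show "w \<in> (\<lambda>(u,v). u @ v) ` ({u. f u \<noteq> 0} \<times> {v. g v \<noteq> 0})"
      by (auto simp: splits_def split: prod.splits)
  qed
  then show ?thesis using f g unfolding FA_def by (auto intro: finite_subset)
qed
lemma fa_pvar[simp]: "pvar x \<in> FA" by (simp add: pvar_eq)
lemma fa_pone[simp]: "pone \<in> FA" by (simp add: pone_eq)
lemma fa_zv[simp]: "zv i \<in> FA" by (simp add: zv_def)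
lemma fa_yv[simp]: "yv i \<in> FA" by (simp add: yv_def)
lemma fa_prodl[simp]: "(\<And>p. p \<in> set ps \<Longrightarrow> p \<in> FA) \<Longrightarrow> prodl ps \<in> FA"
  by (induction ps) (auto simp: prodl_def)

lemma smult_apply: "smult c f w = c * f w" by (simp add: smult_def)
lemma smult_add_left: "smult (a + b) f = smult a f + smult b f"
  by (simp add: smult_def fun_eq_iff distrib_right)
lemma smult_add_right: "smult a (f + g) = smult a f + smult a g"
  by (simp add: smult_def fun_eq_iff distrib_left)
lemma smult_diff_left: "smult (a - b) f = smult a f - smult b f"
  by (simp add: smult_def fun_eq_iff left_diff_distrib)
lemma smult_diff_right: "smult a (f - g) = smult a f - smult a g"
  by (simp add: smult_def fun_eq_iff right_diff_distrib)
lemma smult_smult: "smult a (smult b f) = smult (a * b) f"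
  by (simp add: smult_def fun_eq_iff)
lemma smult_sum: "smult a (\<Sum>i\<in>I. F i) = (\<Sum>i\<in>I. smult a (F i))"
  by (simp add: smult_def fun_eq_iff sum_apply_fun sum_distrib_left)

lemma fa_repr: "f \<in> FA \<Longrightarrow> f = (\<Sum>w\<in>{w. f w \<noteq> 0}. smult (f w) (mon w))"
proof (rule ext)
  fix u assume f: "f \<in> FA"
  have "(\<Sum>w\<in>{w. f w \<noteq> 0}. smult (f w) (mon w)) u = (\<Sum>w\<in>{w. f w \<noteq> 0}. if u = w then f w else 0)"
    by (simp add: sum_apply_fun smult_def mon_def if_distrib cong: if_cong)
  also have "\<dots> = f u" using f by (subst sum.delta') (auto simp: FA_def)
  finally show "f u = (\<Sum>w\<in>{w. f w \<noteq> 0}. smult (f w) (mon w)) u" by simp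
qed

section \<open>Substitution\<close>

lemma prodl_append: "prodl (xs @ ys) = pmult (prodl xs) (prodl ys)"
  by (induction xs) (auto simp: prodl_def pmult_assoc)

lemma wordprod_append: "wordprod \<phi> (a @ b) = pmult (wordprod \<phi> a) (wordprod \<phi> b)"
  by (simp add: wordprod_def prodl_append)

lemma psubst_eq: "finite S \<Longrightarrow> {w. f w \<noteq> 0} \<subseteq> S \<Longrightarrow> psubst \<phi> f = (\<Sum>w\<in>S. smult (f w) (wordprod \<phi> w))"
  unfolding psubst_def
  by (rule ext, simp add: sum_apply_fun smult_def, rule sum.mono_neutral_left) auto

lemma psubst_add: assumes "f \<in> FA" "g \<in> FA" shows "psubst \<phi> (f + g) = psubst \<phi> f + psubst \<phi> g"
proof -
  let ?S = "{w. f w \<noteq> 0} \<union> {w. g w \<noteq> 0}"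
  have fin: "finite ?S" using assms by (simp add: FA_def)
  show ?thesis
    by (subst (1 2 3) psubst_eq[OF fin]) (auto simp: smult_add_left sum.distrib)
qed

lemma psubst_diff: assumes "f \<in> FA" "g \<in> FA" shows "psubst \<phi> (f - g) = psubst \<phi> f - psubst \<phi> g"
proof -
  let ?S = "{w. f w \<noteq> 0} \<union> {w. g w \<noteq> 0}"
  have fin: "finite ?S" using assms by (simp add: FA_def)
  show ?thesis
    by (subst (1 2 3) psubst_eq[OF fin]) (auto simp: smult_diff_left sum_subtractf)
qed

lemma psubst_smult: assumes "f \<in> FA" shows "psubst \<phi> (smult c f) = smult c (psubst \<phi> f)"
proof -
  let ?S = "{w. f w \<noteq> 0}"
  have fin: "finite ?S" using assms by (simp add: FA_def)
  show ?thesis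
    by (subst (1 2) psubst_eq[OF fin]) (auto simp: smult_apply smult_sum smult_smult)
qed

lemma psubst_zero[simp]: "psubst \<phi> 0 = 0"
  by (simp add: psubst_def fun_eq_iff)

lemma psubst_mon: "psubst \<phi> (mon w) = wordprod \<phi> w"
  by (subst psubst_eq[of "{w}"]) (auto simp: mon_def smult_def split: if_splits)

lemma psubst_sum: "(\<And>i. i \<in> I \<Longrightarrow> F i \<in> FA) \<Longrightarrow> psubst \<phi> (\<Sum>i\<in>I. F i) = (\<Sum>i\<in>I. psubst \<phi> (F i))"
  by (induction I rule: infinite_finite_induct) (auto simp: psubst_add)

lemma psubst_pmult: assumes f: "f \<in> FA" and g: "g \<in> FA"
  shows "psubst \<phi> (pmult f g) = pmult (psubst \<phi> f) (psubst \<phi> g)"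
proof -
  let ?A = "{w. f w \<noteq> 0}" and ?B = "{w. g w \<noteq> 0}"
  have fA: "finite ?A" and fB: "finite ?B" using f g by (auto simp: FA_def)
  have "pmult f g = (\<Sum>a\<in>?A. \<Sum>b\<in>?B. smult (f a * g b) (mon (a @ b)))"
  proof -
    have "pmult f g = pmult (\<Sum>a\<in>?A. smult (f a) (mon a)) (\<Sum>b\<in>?B. smult (g b) (mon b))"
      by (rule arg_cong2[where f=pmult]) (rule fa_repr[OF f], rule fa_repr[OF g])
    then show ?thesis
      apply (simp add: pmult_sum_left pmult_sum_right pmult_smult_left pmult_smult_right pmult_mon smult_smult smult_sum)
      apply (subst sum.swap)
      apply (simp add: mult.commute)
      done
  qed
  then have "psubst \<phi> (pmult f g) = (\<Sum>a\<in>?A. \<Sum>b\<in>?B. smult (f a * g b) (wordprod \<phi> (a @ b)))"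
    by (simp add: psubst_sum psubst_smult psubst_mon)
  also have "\<dots> = pmult (\<Sum>a\<in>?A. smult (f a) (wordprod \<phi> a)) (\<Sum>b\<in>?B. smult (g b) (wordprod \<phi> b))"
    apply (simp add: pmult_sum_left pmult_sum_right pmult_smult_left pmult_smult_right wordprod_append smult_smult smult_sum)
    apply (subst sum.swap)
    apply (simp add: mult.commute)
    done
  also have "\<dots> = pmult (psubst \<phi> f) (psubst \<phi> g)"
    by (simp add: psubst_eq[OF fA] psubst_eq[OF fB])
  finally show ?thesis .
qed

lemma psubst_pvar: "psubst \<phi> (pvar x) = \<phi> x"
  by (simp add: pvar_eq psubst_mon wordprod_def prodl_def pone_eq[symmetric])


section \<open>Generic sorting argument\<close>

lemma insort_rel:
  fixes R :: "'a::linorder list \<Rightarrow> 'a list \<Rightarrow> bool"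
  assumes refl: "\<And>x. R x x" and trans: "\<And>x y z. R x y \<Longrightarrow> R y z \<Longrightarrow> R x z"
    and swap: "\<And>u a b v. length u + length v + 2 = m \<Longrightarrow> R (u@a#b#v) (u@b#a#v)"
  shows "length u + length l + 1 = m \<Longrightarrow> R (u@x#l) (u@insort x l)"
proof (induction l arbitrary: u)
  case Nil then show ?case by (simp add: refl)
next
  case (Cons y l)
  show ?case
  proof (cases "x \<le> y")
    case True then show ?thesis by (simp add: refl)
  next
    case False
    have 1: "R (u@x#y#l) (u@y#x#l)" using swap[of u l x y] Cons.prems by simp
    have 2: "R ((u@[y])@x#l) ((u@[y])@insort x l)" using Cons.IH[of "u@[y]"] Cons.prems by simp
    from trans[OF 1] 2 False show ?thesis by simp
  qed
qed

lemma sort_rel: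
  fixes R :: "'a::linorder list \<Rightarrow> 'a list \<Rightarrow> bool"
  assumes refl: "\<And>x. R x x" and trans: "\<And>x y z. R x y \<Longrightarrow> R y z \<Longrightarrow> R x z"
    and swap: "\<And>u a b v. length u + length v + 2 = m \<Longrightarrow> R (u@a#b#v) (u@b#a#v)"
  shows "length u + length xs = m \<Longrightarrow> R (u@xs) (u@sort xs)"
proof (induction xs arbitrary: u)
  case Nil then show ?case by (simp add: refl)
next
  case (Cons x xs)
  have 1: "R ((u@[x])@xs) ((u@[x])@sort xs)" using Cons.IH[of "u@[x]"] Cons.prems by simp
  have 2: "R (u@x#sort xs) (u@insort x (sort xs))"
    using insort_rel[where R=R and m=m and u=u and l="sort xs" and x=x, OF refl trans swap] Cons.prems by simp
  from trans[OF _ 2] 1 show ?case by simp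
qed

definition PP :: "(nat \<times> nat) list \<Rightarrow> ('k::field) fpoly" where
  "PP ps = prodl (map (\<lambda>(a,b). jord (zv a) (zv b)) ps)"
definition ZZ :: "nat list \<Rightarrow> ('k::field) fpoly" where
  "ZZ js = prodl (map zv js)"

lemma fa_jord[simp]: "f \<in> FA \<Longrightarrow> g \<in> FA \<Longrightarrow> jord f g \<in> FA" by (simp add: jord_def padd_eq)
lemma fa_comm[simp]: "f \<in> FA \<Longrightarrow> g \<in> FA \<Longrightarrow> comm f g \<in> FA" by (simp add: comm_def psub_eq)
lemma fa_PP[simp]: "PP ps \<in> FA" unfolding PP_def by (rule fa_prodl) auto
lemma fa_ZZ[simp]: "ZZ js \<in> FA" unfolding ZZ_def by (rule fa_prodl) auto

lemma PP_Nil[simp]: "PP [] = pone" by (simp add: PP_def prodl_def)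
lemma PP_Cons: "PP ((a,b)#ps) = pmult (jord (zv a) (zv b)) (PP ps)" by (simp add: PP_def prodl_def)
lemma PP_append: "PP (ps @ qs) = pmult (PP ps) (PP qs)" by (simp add: PP_def prodl_append)
lemma ZZ_Nil[simp]: "ZZ [] = pone" by (simp add: ZZ_def prodl_def)
lemma ZZ_Cons: "ZZ (a#js) = pmult (zv a) (ZZ js)" by (simp add: ZZ_def prodl_def)
lemma ZZ_append: "ZZ (js @ ks) = pmult (ZZ js) (ZZ ks)" by (simp add: ZZ_def prodl_append)
lemma ZZ_mon: "ZZ js = mon (map Z js)"
  by (induction js) (auto simp: ZZ_Cons zv_def pvar_eq pone_eq pmult_mon)

lemma jord_sym: "jord f g = jord g f" by (simp add: jord_def padd_eq add.commute)

definition ren :: "nat \<Rightarrow> nat \<Rightarrow> nat \<Rightarrow> nat \<Rightarrow> var \<Rightarrow> ('k::field) fpoly" where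
  "ren a b c d v = (case v of Y i \<Rightarrow> yv i | Z i \<Rightarrow> (if i = 1 then zv a else if i = 2 then zv b else if i = 3 then zv c else zv d))"

lemma graded_ren: "graded_subst (ren a b c d)"
proof -
  have h0: "hom0 (yv i :: 'k::field fpoly)" for i
    unfolding hom0_def using fa_yv[of i] by (auto simp: yv_def pvar_def zdeg_def split: if_splits)
  have h1: "hom1 (zv i :: 'k::field fpoly)" for i
    unfolding hom1_def using fa_zv[of i] by (auto simp: zv_def pvar_def zdeg_def split: if_splits)
  show ?thesis by (auto simp: graded_subst_def ren_def h0 h1)
qed

lemma psubst_G4: "psubst (ren a b c d) (comm (jord (zv 1) (zv 2)) (zv 3)) = comm (jord (zv a) (zv b)) (zv c)"
  by (simp add: comm_def jord_def psub_eq padd_eq psubst_diff psubst_add psubst_pmult)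
     (simp add: zv_def psubst_pvar ren_def)

lemma psubst_G5: "psubst (ren a b c d) (psub (pmult (jord (zv 1) (zv 2)) (jord (zv 3) (zv 4)))
                 (pmult (jord (zv 1) (zv 3)) (jord (zv 2) (zv 4)))) =
   psub (pmult (jord (zv a) (zv b)) (jord (zv c) (zv d))) (pmult (jord (zv a) (zv c)) (jord (zv b) (zv d)))"
  by (simp add: comm_def jord_def psub_eq padd_eq psubst_diff psubst_add psubst_pmult)
     (simp add: zv_def psubst_pvar ren_def)


lemma mem_eq: "x = y \<Longrightarrow> y \<in> A \<Longrightarrow> x \<in> A" by simp

lemma span_in: "p \<in> S \<Longrightarrow> p \<in> lin_span S"
  using lin_span.step[of p S pzero 1] lin_span.zero[of S]
  by (simp add: padd_eq pzero_eq smult_def)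

lemma span_zero: "0 \<in> lin_span S" using lin_span.zero by (simp add: pzero_eq[symmetric])

lemma span_add: "p \<in> lin_span S \<Longrightarrow> q \<in> lin_span S \<Longrightarrow> p + q \<in> lin_span S"
proof (induction p rule: lin_span.induct)
  case zero then show ?case by (simp add: pzero_eq)
next
  case (step p q' c)
  have "q' + q \<in> lin_span S" by (rule step.IH[OF step.prems])
  from lin_span.step[OF step.hyps(1) this, of c]
  have "smult c p + (q' + q) \<in> lin_span S" by (simp only: padd_eq)
  then show "padd (smult c p) q' + q \<in> lin_span S" by (simp only: padd_eq add.assoc)
qed

lemma span_smult: "p \<in> lin_span S \<Longrightarrow> smult c p \<in> lin_span S"
proof (induction p rule: lin_span.induct)
  case zero then show ?case using lin_span.zero by (simp add: pzero_def smult_def)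
next
  case (step p q d)
  have eq: "smult c (padd (smult d p) q) = padd (smult (c*d) p) (smult c q)"
    by (simp add: padd_def smult_def fun_eq_iff distrib_left mult.assoc)
  show ?case unfolding eq by (rule lin_span.step[OF step.hyps(1) step.IH])
qed

lemma span_diff: "p \<in> lin_span S \<Longrightarrow> q \<in> lin_span S \<Longrightarrow> p - q \<in> lin_span S"
proof -
  assume p: "p \<in> lin_span S" and q: "q \<in> lin_span S"
  have "p + smult (-1) q \<in> lin_span S" by (intro span_add span_smult p q)
  moreover have "p + smult (-1) q = p - q" by (simp add: smult_def fun_eq_iff)
  ultimately show ?thesis by simp
qed

lemma span_sum: "(\<And>i. i \<in> I \<Longrightarrow> F i \<in> lin_span S) \<Longrightarrow> (\<Sum>i\<in>I. F i) \<in> lin_span S"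
  by (induction I rule: infinite_finite_induct) (auto intro: span_add span_zero)

locale Tctx =
  fixes J :: "('k::field) fpoly set"
  assumes J0: "0 \<in> J"
  and Jadd: "f \<in> J \<Longrightarrow> g \<in> J \<Longrightarrow> f + g \<in> J"
  and Jsmult: "f \<in> J \<Longrightarrow> smult c f \<in> J"
  and Jl: "f \<in> J \<Longrightarrow> h \<in> FA \<Longrightarrow> pmult h f \<in> J"
  and Jr: "f \<in> J \<Longrightarrow> h \<in> FA \<Longrightarrow> pmult f h \<in> J"
  and Jsub: "graded_subst \<phi> \<Longrightarrow> g \<in> Igens \<Longrightarrow> psubst \<phi> g \<in> J"
begin

lemma Jneg: "f \<in> J \<Longrightarrow> - f \<in> J"
proof -
  assume "f \<in> J"
  then have "smult (-1) f \<in> J" by (rule Jsmult)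
  moreover have "smult (-1) f = - f" unfolding smult_def by (rule ext) simp
  ultimately show ?thesis by simp
qed

lemma Jdiff: "f \<in> J \<Longrightarrow> g \<in> J \<Longrightarrow> f - g \<in> J"
proof -
  assume "f \<in> J" "g \<in> J"
  then have "f + (- g) \<in> J" by (intro Jadd Jneg)
  then show ?thesis by (metis diff_conv_add_uminus)
qed

lemma Jsum: "(\<And>i. i \<in> I \<Longrightarrow> F i \<in> J) \<Longrightarrow> (\<Sum>i\<in>I. F i) \<in> J"
proof (induction I rule: infinite_finite_induct)
  case (infinite A)
  then have "(\<Sum>i\<in>A. F i) = 0" by simp
  then show ?case by (metis J0 infinite(1) sum.infinite)
next
  case empty then show ?case by (simp only: sum.empty J0)
next
  case (insert x X)
  have 1: "F x \<in> J" using insert.prems by simp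
  have 2: "sum F X \<in> J" using insert.prems by (intro insert.IH) simp
  show ?case unfolding sum.insert[OF insert.hyps] by (rule Jadd[OF 1 2])
qed

lemma F4: "pmult (jord (zv a) (zv b)) (zv c) - pmult (zv c) (jord (zv a) (zv b)) \<in> J"
proof -
  have "comm (jord (zv 1) (zv 2)) (zv 3) \<in> Igens" unfolding Igens_def
    by (rule UnI1, rule insertI2, rule insertI2, rule insertI2, rule insertI2, rule insertI1)
  from Jsub[OF graded_ren this, of a b c 0] show ?thesis unfolding psubst_G4 unfolding comm_def psub_eq .
qed

lemma F5: "pmult (jord (zv a) (zv b)) (jord (zv c) (zv d)) - pmult (jord (zv a) (zv c)) (jord (zv b) (zv d)) \<in> J"
proof -
  have "psub (pmult (jord (zv 1) (zv 2)) (jord (zv 3) (zv 4)))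
                 (pmult (jord (zv 1) (zv 3)) (jord (zv 2) (zv 4))) \<in> Igens" unfolding Igens_def
    by (rule UnI1, rule insertI2, rule insertI2, rule insertI2, rule insertI2, rule insertI2, rule insertI1)
  from Jsub[OF graded_ren this, of a b c d] show ?thesis unfolding psubst_G5 unfolding psub_eq .
qed

lemma comm_ZZ: "pmult (ZZ u) (jord (zv a) (zv b)) - pmult (jord (zv a) (zv b)) (ZZ u) \<in> J"
proof (induction u)
  case Nil then show ?case by (simp only: ZZ_Nil pmult_one_left pmult_one_right diff_self J0)
next
  case (Cons c u)
  let ?j = "jord (zv a) (zv b) :: 'k fpoly"
  have "pmult (ZZ (c#u)) ?j - pmult ?j (ZZ (c#u)) =
        pmult (zv c) (pmult (ZZ u) ?j - pmult ?j (ZZ u)) + pmult (- (pmult ?j (zv c) - pmult (zv c) ?j)) (ZZ u)"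
    by (simp add: ZZ_Cons pmult_diff_left pmult_diff_right pmult_assoc pmult_minus_left algebra_simps)
  moreover have "\<dots> \<in> J" by (intro Jadd Jl Jr Jneg Cons.IH F4 fa_ZZ fa_zv)
  ultimately show ?case by (simp only:)
qed


lemma swap_id: "pmult (PP ps) (ZZ (u@a#b#v)) - (pmult (PP (ps@[(a,b)])) (ZZ (u@v)) - pmult (PP ps) (ZZ (u@b#a#v))) \<in> J"
proof -
  let ?j = "jord (zv a) (zv b) :: 'k fpoly"
  have "pmult (PP ps) (ZZ (u@a#b#v)) - (pmult (PP (ps@[(a,b)])) (ZZ (u@v)) - pmult (PP ps) (ZZ (u@b#a#v)))
     = pmult (PP ps) (pmult (pmult (ZZ u) ?j - pmult ?j (ZZ u)) (ZZ v))"
    by (simp add: PP_append PP_Cons ZZ_append ZZ_Cons jord_def padd_eq pmult_add_left pmult_add_right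
        pmult_diff_left pmult_diff_right pmult_assoc algebra_simps)
  moreover have "\<dots> \<in> J" by (intro Jl Jr comm_ZZ fa_ZZ fa_PP)
  ultimately show ?thesis by (simp only:)
qed

definition Good :: "nat \<Rightarrow> (nat \<times> nat) list \<Rightarrow> nat list \<Rightarrow> bool" where
  "Good n ps js \<longleftrightarrow> (\<exists>g\<in>lin_span (StdSet n). pmult (PP ps) (ZZ js) - g \<in> J)"

lemma good_swap: assumes "Good n (ps@[(a,b)]) (u@v)" "Good n ps (u@b#a#v)" shows "Good n ps (u@a#b#v)"
proof -
  obtain g1 where g1: "g1 \<in> lin_span (StdSet n)" "pmult (PP (ps@[(a,b)])) (ZZ (u@v)) - g1 \<in> J"
    using assms(1) by (auto simp: Good_def)
  obtain g2 where g2: "g2 \<in> lin_span (StdSet n)" "pmult (PP ps) (ZZ (u@b#a#v)) - g2 \<in> J"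
    using assms(2) by (auto simp: Good_def)
  let ?X = "pmult (PP ps) (ZZ (u@a#b#v)) :: 'k fpoly"
  let ?A = "pmult (PP (ps@[(a,b)])) (ZZ (u@v)) :: 'k fpoly"
  let ?B = "pmult (PP ps) (ZZ (u@b#a#v)) :: 'k fpoly"
  have "?X - (g1 - g2) = ((?X - (?A - ?B)) + (?A - g1)) - (?B - g2)" by (simp add: algebra_simps)
  moreover have "\<dots> \<in> J" by (intro Jdiff Jadd swap_id g1 g2)
  ultimately have "?X - (g1 - g2) \<in> J" by (simp only:)
  moreover have "g1 - g2 \<in> lin_span (StdSet n)" by (intro span_diff g1 g2)
  ultimately show ?thesis unfolding Good_def by blast
qed

end

fun pairs :: "nat list \<Rightarrow> (nat \<times> nat) list" where
  "pairs (a#b#l) = (a,b) # pairs l"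
| "pairs _ = []"

definition flat :: "(nat \<times> nat) list \<Rightarrow> nat list" where
  "flat ps = concat (map (\<lambda>(a,b). [a,b]) ps)"

lemma flat_Cons[simp]: "flat ((a,b)#ps) = a#b#flat ps" by (simp add: flat_def)
lemma flat_Nil[simp]: "flat [] = []" by (simp add: flat_def)
lemma flat_append[simp]: "flat (ps @ qs) = flat ps @ flat qs" by (simp add: flat_def)
lemma pairs_flat[simp]: "pairs (flat ps) = ps" by (induction ps) auto
lemma length_flat: "length (flat ps) = 2 * length ps" by (induction ps) auto
lemma flat_pairs: "even (length l) \<Longrightarrow> flat (pairs l) = l"
  by (induction l rule: pairs.induct) auto
lemma pairs_append: "even (length u) \<Longrightarrow> pairs (u @ w) = pairs u @ pairs w"
  by (induction u rule: pairs.induct) auto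

context Tctx begin

lemma PP_swap: assumes "even (length (u@a#b#v))"
  shows "PP (pairs (u@a#b#v)) - PP (pairs (u@b#a#v)) \<in> J"
proof (cases "even (length u)")
  case True
  then have "PP (pairs (u@a#b#v)) - PP (pairs (u@b#a#v)) = 0"
    by (simp add: pairs_append PP_append PP_Cons jord_sym[of "zv a"])
  then show ?thesis using J0 by (rule mem_eq)
next
  case False
  then obtain u' c where u: "u = u' @ [c]" by (cases u rule: rev_cases) auto
  have "v \<noteq> []" using assms False by auto
  then obtain d v' where v: "v = d # v'" by (cases v) auto
  have eu: "even (length u')" using False u by simp
  have "PP (pairs (u@a#b#v)) - PP (pairs (u@b#a#v)) =
     pmult (PP (pairs u')) (pmult (pmult (jord (zv c) (zv a)) (jord (zv b) (zv d)) -
        pmult (jord (zv c) (zv b)) (jord (zv a) (zv d))) (PP (pairs v')))"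
    using eu by (simp add: u v pairs_append PP_append PP_Cons pmult_diff_left pmult_diff_right pmult_assoc)
  moreover have "\<dots> \<in> J" by (intro Jl Jr F5 fa_PP)
  ultimately show ?thesis by (rule mem_eq)
qed

lemma PP_sort: assumes "even (length l)" shows "PP (pairs l) - PP (pairs (sort l)) \<in> J"
proof -
  define R where "R = (\<lambda>x y. PP (pairs x) - PP (pairs y) \<in> J)"
  have "R ([]@l) ([]@sort l)"
  proof (rule sort_rel[where R=R and m="length l"])
    show "R x x" for x unfolding R_def using J0 by (simp only: diff_self)
    show "R x z" if "R x y" "R y z" for x y z
    proof -
      have "PP (pairs x) - PP (pairs z) = (PP (pairs x) - PP (pairs y)) + (PP (pairs y) - PP (pairs z))"
        by (simp add: algebra_simps)
      then show ?thesis using that unfolding R_def by (blast intro: mem_eq Jadd)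
    qed
    show "R (u@a#b#v) (u@b#a#v)" if "length u + length v + 2 = length l" for u a b v
      unfolding R_def by (rule PP_swap) (use that assms in simp)
  qed simp
  then show ?thesis by (simp add: R_def)
qed


lemma good_sorted: assumes "sorted js" "set (flat ps) \<subseteq> {1..n}" "set js \<subseteq> {1..n}"
  shows "Good n ps js"
proof -
  let ?ps = "pairs (sort (flat ps))"
  have ev: "even (length (flat ps))" by (simp add: length_flat)
  have fl: "flat ?ps = sort (flat ps)" using ev by (intro flat_pairs) simp
  have "std_poly ?ps js \<in> StdSet n"
    unfolding StdSet_def using assms fl
    by (intro CollectI exI[of _ ?ps] exI[of _ js]) (simp add: flat_def)
  then have inS: "pmult (PP ?ps) (ZZ js) \<in> lin_span (StdSet n)"
    by (intro span_in) (simp add: std_poly_def PP_def ZZ_def)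
  have "pmult (PP ps) (ZZ js) - pmult (PP ?ps) (ZZ js) = pmult (PP (pairs (flat ps)) - PP ?ps) (ZZ js)"
    by (simp add: pmult_diff_left)
  moreover have "\<dots> \<in> J" by (intro Jr PP_sort ev fa_ZZ)
  ultimately have "pmult (PP ps) (ZZ js) - pmult (PP ?ps) (ZZ js) \<in> J" by (rule mem_eq)
  with inS show ?thesis unfolding Good_def by blast
qed


lemma good_all: "set (flat ps) \<subseteq> {1..n} \<Longrightarrow> set js \<subseteq> {1..n} \<Longrightarrow> Good n ps js"
proof (induction "length js" arbitrary: js ps rule: less_induct)
  case less
  define R where "R = (\<lambda>x y. set x = set y \<and> (set x \<subseteq> {1..n} \<longrightarrow>
      (\<forall>ps. set (flat ps) \<subseteq> {1..n} \<longrightarrow> (Good n ps x \<longleftrightarrow> Good n ps y))))"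
  have "R ([]@js) ([]@sort js)"
  proof (rule sort_rel[where R=R and m="length js"])
    show "R x x" for x unfolding R_def by simp
    show "R x z" if "R x y" "R y z" for x y z using that unfolding R_def by auto
    show "R (u@a#b#v) (u@b#a#v)" if len: "length u + length v + 2 = length js" for u a b v
      unfolding R_def
    proof (intro conjI impI allI)
      show "set (u@a#b#v) = set (u@b#a#v)" by auto
      fix qs assume s1: "set (u@a#b#v) \<subseteq> {1..n}" and s2: "set (flat qs) \<subseteq> {1..n}"
      have h1: "Good n (qs@[(a,b)]) (u@v)"
        by (rule less.hyps) (use len s1 s2 in auto)
      have h2: "Good n (qs@[(b,a)]) (u@v)"
        by (rule less.hyps) (use len s1 s2 in auto)
      show "Good n qs (u@a#b#v) \<longleftrightarrow> Good n qs (u@b#a#v)"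
        using good_swap[OF h1] good_swap[OF h2] by blast
    qed
  qed simp
  then have "Good n ps js \<longleftrightarrow> Good n ps (sort js)" using less.prems by (simp add: R_def)
  moreover have "Good n ps (sort js)" by (rule good_sorted) (use less.prems in auto)
  ultimately show ?case by simp
qed

lemma main_J: assumes f: "f \<in> FA" and sup: "\<forall>w. f w \<noteq> 0 \<longrightarrow> set w \<subseteq> Z ` {1..n}"
  shows "\<exists>g\<in>lin_span (StdSet n). f - g \<in> J"
proof -
  let ?S = "{w. f w \<noteq> 0}"
  have "\<forall>w\<in>?S. \<exists>g. g \<in> lin_span (StdSet n) \<and> mon w - g \<in> J"
  proof
    fix w assume "w \<in> ?S"
    then have sw: "set w \<subseteq> Z ` {1..n}" using sup by auto
    define js where "js = map (\<lambda>v. case v of Z i \<Rightarrow> i | Y i \<Rightarrow> i) w"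
    have wjs: "w = map Z js" using sw unfolding js_def by (induction w) auto
    have "set js \<subseteq> {1..n}" using sw unfolding js_def by auto
    then have "Good n [] js" by (intro good_all) auto
    then show "\<exists>g. g \<in> lin_span (StdSet n) \<and> mon w - g \<in> J"
      unfolding Good_def wjs by (auto simp: ZZ_mon)
  qed
  then obtain G where G: "\<And>w. w \<in> ?S \<Longrightarrow> G w \<in> lin_span (StdSet n) \<and> mon w - G w \<in> J"
    by metis
  let ?g = "\<Sum>w\<in>?S. smult (f w) (G w)"
  have "?g \<in> lin_span (StdSet n)" using G by (intro span_sum span_smult) auto
  moreover have "f - ?g = (\<Sum>w\<in>?S. smult (f w) (mon w - G w))"
  proof -
    have "f - ?g = (\<Sum>w\<in>?S. smult (f w) (mon w)) - ?g"
      by (subst fa_repr[OF f]) (rule refl)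
    also have "\<dots> = (\<Sum>w\<in>?S. smult (f w) (mon w - G w))"
      by (simp add: sum_subtractf[symmetric] smult_diff_right)
    finally show ?thesis .
  qed
  moreover have "(\<Sum>w\<in>?S. smult (f w) (mon w - G w)) \<in> J"
    using G by (intro Jsum Jsmult) auto
  ultimately show ?thesis by (metis mem_eq)
qed
end


lemma Tctx_I: "Tctx (Iideal :: ('k::field) fpoly set)"
proof
  have fam: "\<And>J. is_T2_ideal J \<Longrightarrow> is_ideal J" by (simp add: is_T2_ideal_def)
  show "0 \<in> (Iideal :: 'k fpoly set)"
    unfolding Iideal_def T2_gen_def using fam by (auto simp: is_ideal_def pzero_eq)
  show "f + g \<in> Iideal" if "f \<in> Iideal" "g \<in> Iideal" for f g :: "'k fpoly"
    using that unfolding Iideal_def T2_gen_def is_T2_ideal_def is_ideal_def padd_eq by blast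
  show "smult c f \<in> Iideal" if "f \<in> Iideal" for f :: "'k fpoly" and c
    using that unfolding Iideal_def T2_gen_def is_T2_ideal_def is_ideal_def by blast
  show "pmult h f \<in> Iideal" if "f \<in> Iideal" "h \<in> FA" for f h :: "'k fpoly"
    using that unfolding Iideal_def T2_gen_def is_T2_ideal_def is_ideal_def by blast
  show "pmult f h \<in> Iideal" if "f \<in> Iideal" "h \<in> FA" for f h :: "'k fpoly"
    using that unfolding Iideal_def T2_gen_def is_T2_ideal_def is_ideal_def by blast
  show "psubst \<phi> g \<in> Iideal" if "graded_subst \<phi>" "g \<in> Igens" for \<phi> and g :: "'k fpoly"
    using that unfolding Iideal_def T2_gen_def by (auto simp: is_T2_ideal_def)
qed

theorem mainTheorem4:
  fixes f :: "('k::field) fpoly" and n :: nat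
  assumes "infinite (UNIV :: 'k set)"
    and "(2::'k) \<noteq> 0"
    and "f \<in> FA"
    and "\<forall>w. f w \<noteq> 0 \<longrightarrow> set w \<subseteq> Z ` {1..n}"
  shows "\<exists>g \<in> lin_span (StdSet n). psub f g \<in> Iideal"
proof -
  interpret Tctx "Iideal :: 'k fpoly set" by (rule Tctx_I)
  show ?thesis using main_J[OF assms(3,4)] by (simp add: psub_eq)
qed

end
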